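(* Let $O=\langle B,E,F,\mathsf c\rangle$ be an occurrence net with associated conflict relation $\#$. Let $B^{\#}=\{\{e,e'\}\mid e\ \#\ e'\}$ (a set of fresh conditions) and $F^{\#}=\{(A,e)\mid A\in B^{\#},\ e\in A\}$. Then $O^{\#}=\langle B\cup B^{\#},E,F\cup F^{\#},\mathsf c\cup B^{\#}\rangle$ is an occurrence net and $O$ and $O^{\#}$ have the same configurations (equivalently, the same states).
   Context: A net $N=\langle S,T,F,\mathsf m\rangle$ consists of disjoint sets $S$ (places) and $T$ (transitions), flow $F\subseteq(S\times T)\cup(T\times S)$ and initial marking $\mathsf m$; ${}^\bullet x=\{y\mid(y,x)\in F\}$, $x^\bullet=\{y\mid(x,y)\in F\}$. $t$ is enabled at $m$ if ${}^\bullet t\subseteq m$; firing yields $m-{}^\bullet t+t^\bullet$. A state is the multiset of transitions of a finite firing sequence from $\mathsf m$; for occurrence nets (identity labelling) configurations are the states. A net is safe if every reachable marking has at most one token per place. $<_N$ is the transitive closure of $F$ and $\le_N$ its reflexive closure; $N$ is acyclic if $\le_N$ is a partial order. An occurrence net $O=\langle B,E,F,\mathsf c\rangle$ is an acyclic safe net such that: for every $b\in B$, ${}^\bullet b$ is empty or a singleton, and ${}^\bullet b=\emptyset$ for $b\in\mathsf c$; for every $b\in B$ there is $b'\in\mathsf c$ with $b'\le_O b$; for every $e\in E$ the set $\{e'\in E\mid e'\le_O e\}$ is finite; and the conflict relation $\#$, defined by $e\ \#_0\ e'$ iff $e\neq e'$ and ${}^\bullet e\cap{}^\bullet e'\neq\emptyset$,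 and $x\ \#\ x'$ iff there are $y\ \#_0\ y'$ with $y\le_O x$, $y'\le_O x'$, is irreflexive. *)

theory Defs
  imports Main "HOL-Library.Multiset"
begin

text \<open>The flow relation
  F \<subseteq> (S \<times> T) \<union> (T \<times> S) is split into its two parts pre (place-to-transition
  arcs) and post (transition-to-place arcs).\<close>

record ('p, 't) net =
  places :: "'p set"
  trans  :: "'t set"
  pre    :: "('p \<times> 't) set"
  post   :: "('t \<times> 'p) set"
  init   :: "'p set"

definition wf_net :: "('p, 't) net \<Rightarrow> bool" where
  "wf_net N \<longleftrightarrow> pre N \<subseteq> places N \<times> trans N \<and> post N \<subseteq> trans N \<times> places N
     \<and> init N \<subseteq> places N"

definition preT :: "('p, 't) net \<Rightarrow> 't \<Rightarrow> 'p set" where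
  "preT N t = {p. (p, t) \<in> pre N}"
definition postT :: "('p, 't) net \<Rightarrow> 't \<Rightarrow> 'p set" where
  "postT N t = {p. (t, p) \<in> post N}"
definition preP :: "('p, 't) net \<Rightarrow> 'p \<Rightarrow> 't set" where
  "preP N p = {t. (t, p) \<in> post N}"

type_synonym 'p marking = "'p \<Rightarrow> nat"

definition init_marking :: "('p, 't) net \<Rightarrow> 'p marking" where
  "init_marking N = (\<lambda>p. if p \<in> init N then 1 else 0)"

definition enabled :: "('p, 't) net \<Rightarrow> 'p marking \<Rightarrow> 't \<Rightarrow> bool" where
  "enabled N m t \<longleftrightarrow> (\<forall>p \<in> preT N t. m p \<ge> 1)"

definition fire :: "('p, 't) net \<Rightarrow> 'p marking \<Rightarrow> 't \<Rightarrow> 'p marking" where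
  "fire N m t = (\<lambda>p. m p - (if p \<in> preT N t then 1 else 0) + (if p \<in> postT N t then 1 else 0))"

fun fireseq :: "('p, 't) net \<Rightarrow> 'p marking \<Rightarrow> 't list \<Rightarrow> 'p marking option" where
  "fireseq N m [] = Some m"
| "fireseq N m (t # ts) =
     (if t \<in> trans N \<and> enabled N m t then fireseq N (fire N m t) ts else None)"

definition reachable :: "('p, 't) net \<Rightarrow> 'p marking set" where
  "reachable N = {m. \<exists>ts. fireseq N (init_marking N) ts = Some m}"

text \<open>States: multisets of transitions of finite firing sequences from the initial marking.
  For occurrence nets these are the configurations.\<close>
definition states :: "('p, 't) net \<Rightarrow> 't multiset set" where
  "states N = {mset ts | ts. fireseq N (init_marking N) ts \<noteq> None}"

abbreviation configurations :: "('p, 't) net \<Rightarrow> 't multiset set" where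
  "configurations N \<equiv> states N"

definition safe :: "('p, 't) net \<Rightarrow> bool" where
  "safe N \<longleftrightarrow> (\<forall>m \<in> reachable N. \<forall>p. m p \<le> 1)"

definition flow :: "('p, 't) net \<Rightarrow> ('p + 't) rel" where
  "flow N = {(Inl p, Inr t) | p t. (p, t) \<in> pre N} \<union> {(Inr t, Inl p) | t p. (t, p) \<in> post N}"

definition lt_N :: "('p, 't) net \<Rightarrow> ('p + 't) rel" where
  "lt_N N = (flow N)\<^sup>+"

definition le_N :: "('p, 't) net \<Rightarrow> ('p + 't) rel" where
  "le_N N = (flow N)\<^sup>*"

definition nodes :: "('p, 't) net \<Rightarrow> ('p + 't) set" where
  "nodes N = Inl ` places N \<union> Inr ` trans N"

definition acyclic_net :: "('p, 't) net \<Rightarrow> bool" where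
  "acyclic_net N \<longleftrightarrow> partial_order_on (nodes N) (le_N N \<inter> nodes N \<times> nodes N)"

definition conflict0 :: "('p, 't) net \<Rightarrow> 't \<Rightarrow> 't \<Rightarrow> bool" where
  "conflict0 N e e' \<longleftrightarrow> e \<in> trans N \<and> e' \<in> trans N \<and> e \<noteq> e' \<and> preT N e \<inter> preT N e' \<noteq> {}"

definition conflict :: "('p, 't) net \<Rightarrow> ('p + 't) \<Rightarrow> ('p + 't) \<Rightarrow> bool" where
  "conflict N x x' \<longleftrightarrow> (\<exists>y y'. conflict0 N y y' \<and> (Inr y, x) \<in> le_N N \<and> (Inr y', x') \<in> le_N N)"

definition occurrence_net :: "('p, 't) net \<Rightarrow> bool" where
  "occurrence_net ON \<longleftrightarrow>
     wf_net ON \<and> acyclic_net ON \<and> safe ON \<and>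
     (\<forall>b \<in> places ON. preP ON b = {} \<or> (\<exists>e. preP ON b = {e})) \<and>
     (\<forall>b \<in> init ON. preP ON b = {}) \<and>
     (\<forall>b \<in> places ON. \<exists>b' \<in> init ON. (Inl b', Inl b) \<in> le_N ON) \<and>
     (\<forall>e \<in> trans ON. finite {e' \<in> trans ON. (Inr e', Inr e) \<in> le_N ON}) \<and>
     (\<forall>x. \<not> conflict ON x x)"

text \<open>The construction ON^#: fresh conditions {e,e'} for conflicting events,
  made disjoint from B via the sum type.\<close>
definition Bsharp :: "('p, 't) net \<Rightarrow> 't set set" where
  "Bsharp ON = {{e, e'} | e e'. conflict ON (Inr e) (Inr e')}"

definition sharp :: "('p, 't) net \<Rightarrow> ('p + 't set, 't) net" where
  "sharp ON = \<lparr> places = Inl ` places ON \<union> Inr ` Bsharp ON,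
               trans = trans ON,
               pre = {(Inl b, e) | b e. (b, e) \<in> pre ON} \<union> {(Inr A, e) | A e. A \<in> Bsharp ON \<and> e \<in> A},
               post = {(e, Inl b) | e b. (e, b) \<in> post ON},
               init = Inl ` init ON \<union> Inr ` Bsharp ON \<rparr>"

end

theory Submission
  imports Defs
begin

lemma fireseq_snoc:
  "fireseq N m (xs @ [t]) = (case fireseq N m xs of None \<Rightarrow> None
     | Some m' \<Rightarrow> if t \<in> trans N \<and> enabled N m' t then Some (fire N m' t) else None)"
  by (induction xs arbitrary: m) auto

lemma len_filter_mono:
  "(\<And>x. x \<in> set xs \<Longrightarrow> P x \<Longrightarrow> Q x) \<Longrightarrow> length (filter P xs) \<le> length (filter Q xs)"
  by (induction xs) auto

lemma len_filter_two:
  assumes "x \<in> set xs" "y \<in> set xs" "x \<noteq> y" "P x" "P y"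
  shows "2 \<le> length (filter P xs)"
proof -
  have "{x,y} \<subseteq> set (filter P xs)" using assms by auto
  then have "card {x,y} \<le> card (set (filter P xs))" by (intro card_mono) auto
  also have "\<dots> \<le> length (filter P xs)" by (rule card_length)
  finally show ?thesis using assms(3) by simp
qed

lemma len_filter_pos: "0 < length (filter P xs) \<Longrightarrow> \<exists>x\<in>set xs. P x"
  by (induction xs) (auto split: if_splits)

lemma len_filter_ge1: "x \<in> set xs \<Longrightarrow> P x \<Longrightarrow> 1 \<le> length (filter P xs)"
  by (induction xs) auto

lemma flow_cases:
  "(u, v) \<in> flow N \<longleftrightarrow> (\<exists>p t. u = Inl p \<and> v = Inr t \<and> (p,t) \<in> pre N) \<or> (\<exists>p t. u = Inr t \<and> v = Inl p \<and> (t,p) \<in> post N)"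
  unfolding flow_def by auto

locale occ =
  fixes ON :: "('p,'t) net"
  assumes occ: "occurrence_net ON"
begin

lemma wf: "wf_net ON" using occ unfolding occurrence_net_def by blast
lemma acyc: "acyclic_net ON" using occ unfolding occurrence_net_def by blast
lemma safeON: "safe ON" using occ unfolding occurrence_net_def by blast
lemma single: "b \<in> places ON \<Longrightarrow> preP ON b = {} \<or> (\<exists>e. preP ON b = {e})"
  using occ unfolding occurrence_net_def by blast
lemma initP: "b \<in> init ON \<Longrightarrow> preP ON b = {}"
  using occ unfolding occurrence_net_def by blast
lemma rooted: "b \<in> places ON \<Longrightarrow> \<exists>b'\<in>init ON. (Inl b', Inl b) \<in> (flow ON)\<^sup>*"
  using occ unfolding occurrence_net_def le_N_def by blast
lemma fin: "e \<in> trans ON \<Longrightarrow> finite {e' \<in> trans ON. (Inr e', Inr e) \<in> le_N ON}"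
  using occ unfolding occurrence_net_def by blast
lemma irr: "\<not> conflict ON x x"
  using occ unfolding occurrence_net_def by blast

lemma post_places: "(t,p) \<in> post ON \<Longrightarrow> p \<in> places ON \<and> t \<in> trans ON"
  using wf unfolding wf_net_def by auto
lemma pre_places: "(p,t) \<in> pre ON \<Longrightarrow> p \<in> places ON \<and> t \<in> trans ON"
  using wf unfolding wf_net_def by auto

definition cnsm where "cnsm ts b = length (filter (\<lambda>e. b \<in> preT ON e) ts)"
definition prdc where "prdc ts b = length (filter (\<lambda>e. b \<in> postT ON e) ts)"

abbreviation R where "R ts m \<equiv> fireseq ON (init_marking ON) ts = Some m"

lemma inv: "R ts m \<Longrightarrow> set ts \<subseteq> trans ON \<and> (\<forall>b. m b + cnsm ts b = (if b \<in> init ON then 1 else 0) + prdc ts b)"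
proof (induction ts arbitrary: m rule: rev_induct)
  case Nil then show ?case by (auto simp: cnsm_def prdc_def init_marking_def)
next
  case (snoc t ts)
  then obtain m0 where m0: "R ts m0" and en: "t \<in> trans ON" "enabled ON m0 t" and m: "m = fire ON m0 t"
    by (auto simp: fireseq_snoc split: option.splits if_splits)
  from snoc.IH[OF m0] have ih: "set ts \<subseteq> trans ON"
    "\<And>b. m0 b + cnsm ts b = (if b \<in> init ON then 1 else 0) + prdc ts b" by auto
  show ?case
  proof (intro conjI allI)
    show "set (ts@[t]) \<subseteq> trans ON" using ih en by auto
    fix b
    have "b \<in> preT ON t \<Longrightarrow> m0 b \<ge> 1" using en(2) by (auto simp: enabled_def)
    then show "m b + cnsm (ts@[t]) b = (if b \<in> init ON then 1 else 0) + prdc (ts@[t]) b"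
      using ih(2)[of b] m by (auto simp: fire_def cnsm_def prdc_def)
  qed
qed

lemma post_pre:
  assumes "(e, p) \<in> post ON" shows "preT ON e \<noteq> {}"
proof -
  have pp: "p \<in> places ON" using post_places assms by blast
  have ep: "e \<in> preP ON p" using assms by (auto simp: preP_def)
  obtain b' where b': "b' \<in> init ON" "(Inl b', Inl p) \<in> (flow ON)\<^sup>*" using rooted[OF pp] by blast
  show ?thesis
  proof (cases "b' = p")
    case True then show ?thesis using initP b' ep by auto
  next
    case False
    have "(Inl b', Inl p) \<in> (flow ON)\<^sup>+" using b'(2) False by (simp add: rtrancl_eq_or_trancl)
    then obtain z where z: "(Inl b', z) \<in> (flow ON)\<^sup>*" "(z, Inl p) \<in> flow ON"
      by (blast dest: tranclD2)
    then obtain t where zt: "z = Inr t" "(t,p) \<in> post ON" by (auto simp: flow_cases)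
    then have "t \<in> preP ON p" by (auto simp: preP_def)
    with ep single[OF pp] have te: "t = e" by auto
    have "(Inl b', Inr t) \<in> (flow ON)\<^sup>+" using z(1) zt by (simp add: rtrancl_eq_or_trancl)
    then obtain w where "(w, Inr t) \<in> flow ON" by (blast dest: tranclD2)
    then obtain q where "(q,t) \<in> pre ON" by (auto simp: flow_cases)
    then show ?thesis using te by (auto simp: preT_def)
  qed
qed

lemma prod_bound:
  assumes "\<forall>q. cnsm ts q \<le> 1"
  shows "(if b \<in> init ON then 1 else 0) + prdc ts b \<le> 1"
proof -
  have "preP ON b = {} \<or> (\<exists>e. preP ON b = {e})"
  proof (cases "b \<in> places ON")
    case True then show ?thesis using single by blast
  next
    case False then show ?thesis using post_places by (auto simp: preP_def)
  qed
  then show ?thesis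
  proof
    assume "preP ON b = {}"
    then have "prdc ts b = 0" by (auto simp: prdc_def preP_def postT_def filter_empty_conv)
    then show ?thesis by simp
  next
    assume "\<exists>e. preP ON b = {e}"
    then obtain e0 where e0: "preP ON b = {e0}" by blast
    then have ni: "b \<notin> init ON" using initP by auto
    have "(e0, b) \<in> post ON" using e0 by (auto simp: preP_def)
    then obtain q where q: "q \<in> preT ON e0" using post_pre by blast
    have "prdc ts b \<le> cnsm ts q" unfolding prdc_def cnsm_def
    proof (rule len_filter_mono)
      fix x assume "b \<in> postT ON x"
      then have "x \<in> preP ON b" by (auto simp: postT_def preP_def)
      then show "q \<in> preT ON x" using e0 q by auto
    qed
    then show ?thesis using ni assms[rule_format, of q] by simp
  qed
qed

lemma cnsm_le1: "R ts m \<Longrightarrow> cnsm ts b \<le> 1"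
proof (induction ts arbitrary: m b rule: rev_induct)
  case Nil then show ?case by (auto simp: cnsm_def)
next
  case (snoc t ts)
  then obtain m0 where m0: "R ts m0" and en: "t \<in> trans ON" "enabled ON m0 t"
    by (auto simp: fireseq_snoc split: option.splits if_splits)
  have ih: "\<forall>q. cnsm ts q \<le> 1" using snoc.IH[OF m0] by blast
  show ?case
  proof (cases "b \<in> preT ON t")
    case True
    then have "m0 b \<ge> 1" using en(2) by (auto simp: enabled_def)
    moreover have "m0 b + cnsm ts b = (if b \<in> init ON then 1 else 0) + prdc ts b"
      using inv[OF m0] by blast
    moreover note prod_bound[OF ih, of b]
    ultimately have "cnsm ts b = 0" by linarith
    then show ?thesis by (simp add: cnsm_def)
  next
    case False then show ?thesis using ih by (simp add: cnsm_def)
  qed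
qed

lemma producer:
  assumes "R ts m" "t \<in> set ts" "b \<in> preT ON t"
  shows "b \<in> init ON \<or> (\<exists>e0\<in>set ts. b \<in> postT ON e0)"
proof -
  have "1 \<le> cnsm ts b" unfolding cnsm_def using assms(2,3) by (rule len_filter_ge1)
  moreover have "m b + cnsm ts b = (if b \<in> init ON then 1 else 0) + prdc ts b"
    using inv[OF assms(1)] by blast
  ultimately have "b \<in> init ON \<or> 0 < prdc ts b" by (cases "b \<in> init ON") auto
  then show ?thesis
  proof
    assume "0 < prdc ts b"
    then show ?thesis using len_filter_pos[of "\<lambda>e. b \<in> postT ON e" ts] unfolding prdc_def by blast
  qed simp
qed

lemma closure:
  assumes "R ts m" "e \<in> set ts" "(x, Inr e) \<in> (flow ON)\<^sup>*"
  shows "case x of Inr y \<Rightarrow> y \<in> set ts | Inl p \<Rightarrow> p \<in> init ON \<or> (\<exists>e0\<in>set ts. p \<in> postT ON e0)"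
  using assms(3)
proof (induction rule: converse_rtrancl_induct)
  case base then show ?case using assms(2) by simp
next
  case (step x z)
  from step(1) show ?case unfolding flow_cases
  proof (elim disjE exE conjE)
    fix p t assume "x = Inl p" "z = Inr t" "(p,t) \<in> pre ON"
    then show ?thesis using step(3) producer[OF assms(1), of t p] by (auto simp: preT_def)
  next
    fix p t assume xz: "x = Inr t" "z = Inl p" "(t,p) \<in> post ON"
    have pp: "p \<in> places ON" using post_places xz by blast
    have tp: "t \<in> preP ON p" using xz by (auto simp: preP_def)
    from step(3) xz have "p \<in> init ON \<or> (\<exists>e0\<in>set ts. p \<in> postT ON e0)" by simp
    then show ?thesis
    proof
      assume "p \<in> init ON" then show ?thesis using initP tp by auto
    next
      assume "\<exists>e0\<in>set ts. p \<in> postT ON e0"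
      then obtain e0 where "e0 \<in> set ts" "e0 \<in> preP ON p" by (auto simp: postT_def preP_def)
      then show ?thesis using single[OF pp] tp xz by auto
    qed
  qed
qed

lemma no_conflict:
  assumes "R ts m" "conflict ON (Inr e) (Inr e')" "e \<in> set ts" "e' \<in> set ts"
  shows False
proof -
  obtain y y' where c: "conflict0 ON y y'" "(Inr y, Inr e) \<in> (flow ON)\<^sup>*" "(Inr y', Inr e') \<in> (flow ON)\<^sup>*"
    using assms(2) unfolding conflict_def le_N_def by blast
  have y: "y \<in> set ts" using closure[OF assms(1) assms(3) c(2)] by simp
  have y': "y' \<in> set ts" using closure[OF assms(1) assms(4) c(3)] by simp
  obtain b where b: "b \<in> preT ON y" "b \<in> preT ON y'" "y \<noteq> y'" using c(1) unfolding conflict0_def by blast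
  have "2 \<le> length (filter (\<lambda>x. b \<in> preT ON x) ts)"
    by (rule len_filter_two[OF y y' b(3)]) (use b in auto)
  then show False using cnsm_le1[OF assms(1), of b] unfolding cnsm_def by linarith
qed

lemma conflict_sym: "conflict ON x x' \<Longrightarrow> conflict ON x' x"
  unfolding conflict_def conflict0_def by blast

lemma rt_pre: "(Inr y, Inr e) \<in> (flow ON)\<^sup>* \<Longrightarrow> y \<noteq> e \<Longrightarrow> \<exists>q. (q, e) \<in> pre ON"
  by (erule rtranclE) (auto simp: flow_cases)

lemma conf_ev: assumes "conflict ON (Inr e) x" shows "e \<in> trans ON \<and> preT ON e \<noteq> {}"
proof -
  obtain y y' where c: "conflict0 ON y y'" "(Inr y, Inr e) \<in> (flow ON)\<^sup>*"
    using assms unfolding conflict_def le_N_def by blast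
  show ?thesis
  proof (cases "y = e")
    case True then show ?thesis using c(1) unfolding conflict0_def by blast
  next
    case False
    then obtain q where "(q, e) \<in> pre ON" using rt_pre c(2) by blast
    then show ?thesis using pre_places by (auto simp: preT_def)
  qed
qed

lemma Bsharp_trans: "A \<in> Bsharp ON \<Longrightarrow> e \<in> A \<Longrightarrow> e \<in> trans ON"
  unfolding Bsharp_def using conf_ev conflict_sym by blast

lemma Bsharp_le1:
  assumes "R ts m" "A \<in> Bsharp ON"
  shows "length (filter (\<lambda>x. x \<in> A) ts) \<le> 1"
proof -
  obtain e e' where A: "A = {e, e'}" and c: "conflict ON (Inr e) (Inr e')"
    using assms(2) unfolding Bsharp_def by blast
  have c': "conflict ON (Inr e') (Inr e)" using conflict_sym c by blast
  have ne: "e \<noteq> e'" using c irr by blast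
  obtain q where q: "q \<in> preT ON e" using conf_ev[OF c] by blast
  obtain q' where q': "q' \<in> preT ON e'" using conf_ev[OF c'] by blast
  show ?thesis
  proof (cases "e \<in> set ts")
    case True
    then have "e' \<notin> set ts" using no_conflict[OF assms(1) c] by blast
    then have "length (filter (\<lambda>x. x \<in> A) ts) \<le> cnsm ts q" unfolding cnsm_def
      by (intro len_filter_mono) (use A q in auto)
    then show ?thesis using cnsm_le1[OF assms(1), of q] by linarith
  next
    case False
    then have "length (filter (\<lambda>x. x \<in> A) ts) \<le> cnsm ts q'" unfolding cnsm_def
      by (intro len_filter_mono) (use A q' in auto)
    then show ?thesis using cnsm_le1[OF assms(1), of q'] by linarith
  qed
qed

abbreviation S where "S \<equiv> sharp ON"

lemma S_simps:
  "trans S = trans ON"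
  "places S = Inl ` places ON \<union> Inr ` Bsharp ON"
  "init S = Inl ` init ON \<union> Inr ` Bsharp ON"
  by (auto simp: sharp_def)

lemma preT_S: "preT S t = Inl ` preT ON t \<union> Inr ` {A \<in> Bsharp ON. t \<in> A}"
  by (auto simp: sharp_def preT_def)
lemma postT_S: "postT S t = Inl ` postT ON t"
  by (auto simp: sharp_def postT_def)
lemma preP_S_Inl: "preP S (Inl b) = preP ON b"
  by (auto simp: sharp_def preP_def)
lemma preP_S_Inr: "preP S (Inr A) = {}"
  by (auto simp: sharp_def preP_def)

abbreviation RS where "RS ts m \<equiv> fireseq S (init_marking S) ts = Some m"

definition mk where "mk ts m = (\<lambda>q. case q of Inl b \<Rightarrow> m b
   | Inr A \<Rightarrow> if A \<in> Bsharp ON then 1 - length (filter (\<lambda>x. x \<in> A) ts) else 0)"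

lemma mk_Inl[simp]: "mk ts m (Inl b) = m b"
  by (simp add: mk_def)
lemma mk_Inr: "mk ts m (Inr A) = (if A \<in> Bsharp ON then 1 - length (filter (\<lambda>x. x \<in> A) ts) else 0)"
  by (simp add: mk_def)

lemma init_S: "init_marking S = mk [] (init_marking ON)"
proof
  fix q show "init_marking S q = mk [] (init_marking ON) q"
  proof (cases q)
    case (Inl b) then show ?thesis by (auto simp: init_marking_def S_simps)
  next
    case (Inr A) then show ?thesis by (auto simp: init_marking_def S_simps mk_Inr)
  qed
qed

lemma G: "R ts m \<Longrightarrow> RS ts (mk ts m)"
proof (induction ts arbitrary: m rule: rev_induct)
  case Nil
  then have "m = init_marking ON" by simp
  then show ?case using init_S by simp
next
  case (snoc t ts)
  then obtain m0 where m0: "R ts m0" and en: "t \<in> trans ON" "enabled ON m0 t" and m: "m = fire ON m0 t"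
    by (auto simp: fireseq_snoc split: option.splits if_splits)
  have ih: "RS ts (mk ts m0)" using snoc.IH[OF m0] .
  have z: "length (filter (\<lambda>x. x \<in> A) ts) = 0" if "A \<in> Bsharp ON" "t \<in> A" for A
    using Bsharp_le1[OF snoc.prems that(1)] that(2) by simp
  have enS: "enabled S (mk ts m0) t"
    unfolding enabled_def
  proof
    fix q assume "q \<in> preT S t"
    then have "q \<in> Inl ` preT ON t \<or> q \<in> Inr ` {A \<in> Bsharp ON. t \<in> A}" unfolding preT_S by blast
    then show "1 \<le> mk ts m0 q"
    proof
      assume "q \<in> Inl ` preT ON t"
      then obtain p where "q = Inl p" "p \<in> preT ON t" by blast
      then show ?thesis using en(2) unfolding enabled_def by simp
    next
      assume "q \<in> Inr ` {A \<in> Bsharp ON. t \<in> A}"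
      then obtain A where "q = Inr A" "A \<in> Bsharp ON" "t \<in> A" by blast
      then show ?thesis using z[of A] by (simp add: mk_Inr)
    qed
  qed
  have fS: "fire S (mk ts m0) t = mk (ts @ [t]) m"
  proof
    fix q show "fire S (mk ts m0) t q = mk (ts @ [t]) m q"
    proof (cases q)
      case (Inl b)
      have "(Inl b \<in> preT S t) = (b \<in> preT ON t)" "(Inl b \<in> postT S t) = (b \<in> postT ON t)"
        unfolding preT_S postT_S by auto
      then show ?thesis using Inl by (simp add: fire_def m)
    next
      case (Inr A)
      have a: "(Inr A \<in> preT S t) = (A \<in> Bsharp ON \<and> t \<in> A)" "Inr A \<notin> postT S t"
        unfolding preT_S postT_S by auto
      show ?thesis
      proof (cases "A \<in> Bsharp ON \<and> t \<in> A")
        case True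
        then show ?thesis using Inr a z[of A] by (simp add: fire_def mk_Inr)
      next
        case False
        then show ?thesis using Inr a by (auto simp: fire_def mk_Inr)
      qed
    qed
  qed
  show ?case using ih enS fS en(1) by (simp add: fireseq_snoc S_simps)
qed

lemma H: "RS ts ms \<Longrightarrow> R ts (\<lambda>b. ms (Inl b))"
proof (induction ts arbitrary: ms rule: rev_induct)
  case Nil
  then show ?case by (auto simp: init_marking_def S_simps)
next
  case (snoc t ts)
  then obtain m0 where m0: "RS ts m0" and en: "t \<in> trans S" "enabled S m0 t" and m: "ms = fire S m0 t"
    by (auto simp: fireseq_snoc split: option.splits if_splits)
  have ih: "R ts (\<lambda>b. m0 (Inl b))" using snoc.IH[OF m0] .
  have enS: "enabled ON (\<lambda>b. m0 (Inl b)) t"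
    using en(2) unfolding enabled_def preT_S by auto
  have fS: "fire ON (\<lambda>b. m0 (Inl b)) t = (\<lambda>b. ms (Inl b))"
    by (auto simp: fire_def m preT_S postT_S)
  show ?case using ih enS fS en(1) by (simp add: fireseq_snoc S_simps)
qed

lemma states_eq: "states S = states ON"
proof
  show "states S \<subseteq> states ON"
  proof
    fix M assume "M \<in> states S"
    then obtain ts where ts: "M = mset ts" "fireseq S (init_marking S) ts \<noteq> None"
      unfolding states_def by blast
    then obtain ms where "RS ts ms" by blast
    then have "R ts (\<lambda>b. ms (Inl b))" by (rule H)
    then show "M \<in> states ON" unfolding states_def using ts(1) by blast
  qed
  show "states ON \<subseteq> states S"
  proof
    fix M assume "M \<in> states ON"
    then obtain ts where ts: "M = mset ts" "fireseq ON (init_marking ON) ts \<noteq> None"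
      unfolding states_def by blast
    then obtain m where "R ts m" by blast
    then have "RS ts (mk ts m)" by (rule G)
    then show "M \<in> states S" unfolding states_def using ts(1) by blast
  qed
qed

lemma safe_S: "safe S"
  unfolding safe_def reachable_def
proof (intro ballI allI, clarify)
  fix p ts ms assume rs: "RS ts ms"
  have r: "R ts (\<lambda>b. ms (Inl b))" using H[OF rs] .
  define mm where "mm = mk ts (\<lambda>b. ms (Inl b))"
  have "RS ts mm" using G[OF r] unfolding mm_def .
  with rs have eq: "ms = mm" by simp
  have reach: "(\<lambda>b. ms (Inl b)) \<in> reachable ON" using r unfolding reachable_def by blast
  have le: "ms (Inl b) \<le> 1" for b
    using bspec[OF safeON[unfolded safe_def] reach] by simp
  show "ms p \<le> 1"
  proof (cases p)
    case (Inl b) then show ?thesis using le by simp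
  next
    case (Inr A)
    have "mm p \<le> 1" unfolding mm_def using Inr by (simp add: mk_def)
    then show ?thesis using eq by simp
  qed
qed

definition emb :: "'p + 't \<Rightarrow> ('p + 't set) + 't" where
  "emb x = (case x of Inl b \<Rightarrow> Inl (Inl b) | Inr e \<Rightarrow> Inr e)"

lemma emb_simps[simp]: "emb (Inl b) = Inl (Inl b)" "emb (Inr e) = Inr e"
  by (simp_all add: emb_def)

lemma emb_inj: "emb x = emb y \<Longrightarrow> x = y"
  by (cases x; cases y) auto

lemma emb_cases: "(\<exists>x. v = emb x) \<or> (\<exists>A. v = Inl (Inr A))"
proof (cases v)
  case (Inl a)
  then show ?thesis
  proof (cases a)
    case (Inl b) then show ?thesis using \<open>v = Inl a\<close> by (metis emb_simps(1))
  next
    case (Inr A) then show ?thesis using \<open>v = Inl a\<close> by blast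
  qed
next
  case (Inr e) then show ?thesis by (metis emb_simps(2))
qed

lemma flowS_old: "(x,y) \<in> flow ON \<Longrightarrow> (emb x, emb y) \<in> flow S"
  unfolding flow_def sharp_def by auto

lemma flowS_from_emb:
  assumes "(emb x, v) \<in> flow S" shows "\<exists>y. v = emb y \<and> (x,y) \<in> flow ON"
proof (cases x)
  case (Inl b)
  with assms obtain t where "v = Inr t" "(b,t) \<in> pre ON"
    unfolding flow_def sharp_def by auto
  then have "v = emb (Inr t) \<and> (x, Inr t) \<in> flow ON" using Inl unfolding flow_def by auto
  then show ?thesis by blast
next
  case (Inr e)
  with assms obtain b where "v = Inl (Inl b)" "(e,b) \<in> post ON"
    unfolding flow_def sharp_def by auto
  then have "v = emb (Inl b) \<and> (x, Inl b) \<in> flow ON" using Inr unfolding flow_def by auto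
  then show ?thesis by blast
qed

lemma flowS_into_new: "(u, Inl (Inr A)) \<notin> flow S"
  unfolding flow_def sharp_def by auto

lemma rt_old: "(x,y) \<in> (flow ON)\<^sup>* \<Longrightarrow> (emb x, emb y) \<in> (flow S)\<^sup>*"
proof (induction rule: rtrancl_induct)
  case base then show ?case by simp
next
  case (step y z) then show ?case using flowS_old by (blast intro: rtrancl_into_rtrancl)
qed

lemma rt_from_emb: "(u, v) \<in> (flow S)\<^sup>* \<Longrightarrow> u = emb x \<Longrightarrow> \<exists>y. v = emb y \<and> (x,y) \<in> (flow ON)\<^sup>*"
proof (induction rule: rtrancl_induct)
  case base then show ?case by blast
next
  case (step v w)
  then obtain y where y: "v = emb y" "(x,y) \<in> (flow ON)\<^sup>*" by blast
  with step(2) obtain y' where "w = emb y'" "(y,y') \<in> flow ON" using flowS_from_emb by blast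
  then show ?case using y by (blast intro: rtrancl_into_rtrancl)
qed

lemma rt_into_new: "(u, Inl (Inr A)) \<in> (flow S)\<^sup>* \<Longrightarrow> u = Inl (Inr A)"
proof -
  assume a: "(u, Inl (Inr A)) \<in> (flow S)\<^sup>*"
  show ?thesis
  proof (rule ccontr)
    assume "u \<noteq> Inl (Inr A)"
    then have "(u, Inl (Inr A)) \<in> (flow S)\<^sup>+" using a by (simp add: rtrancl_eq_or_trancl)
    then obtain z where "(z, Inl (Inr A)) \<in> flow S" by (blast dest: tranclD2)
    then show False using flowS_into_new by blast
  qed
qed

lemma nodes_emb: "emb x \<in> nodes S \<Longrightarrow> x \<in> nodes ON"
  by (cases x) (auto simp: nodes_def S_simps)

lemma antiON: "(x,y) \<in> (flow ON)\<^sup>* \<Longrightarrow> (y,x) \<in> (flow ON)\<^sup>* \<Longrightarrow> x \<in> nodes ON \<Longrightarrow> y \<in> nodes ON \<Longrightarrow> x = y"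
  using acyc unfolding acyclic_net_def partial_order_on_def antisym_on_def le_N_def by blast

lemma acyc_S: "acyclic_net S"
  unfolding acyclic_net_def partial_order_on_def preorder_on_def
proof (intro conjI)
  show "le_N S \<inter> nodes S \<times> nodes S \<subseteq> nodes S \<times> nodes S" by blast
  show "refl_on (nodes S) (le_N S \<inter> nodes S \<times> nodes S)" unfolding refl_on_def le_N_def by blast
  show "trans_on UNIV (le_N S \<inter> nodes S \<times> nodes S)" unfolding trans_on_def le_N_def
    by (blast intro: rtrancl_trans)
  show "antisym (le_N S \<inter> nodes S \<times> nodes S)" unfolding antisym_on_def le_N_def
  proof (intro ballI impI)
    fix a b assume ab: "(a,b) \<in> (flow S)\<^sup>* \<inter> nodes S \<times> nodes S" and ba: "(b,a) \<in> (flow S)\<^sup>* \<inter> nodes S \<times> nodes S"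
    from emb_cases[of a] show "a = b"
    proof
      assume "\<exists>x. a = emb x"
      then obtain x where x: "a = emb x" by blast
      obtain y where y: "b = emb y" "(x,y) \<in> (flow ON)\<^sup>*" using rt_from_emb[OF _ x] ab by blast
      obtain z where z: "a = emb z" "(y,z) \<in> (flow ON)\<^sup>*" using rt_from_emb[OF _ y(1)] ba by blast
      have "z = x" using x z(1) emb_inj by metis
      moreover have "x \<in> nodes ON" "y \<in> nodes ON" using ab x y(1) nodes_emb by auto
      ultimately have "x = y" using antiON y(2) z(2) by blast
      then show "a = b" using x y by simp
    next
      assume "\<exists>A. a = Inl (Inr A)"
      then obtain A where "a = Inl (Inr A)" by blast
      then show "a = b" using rt_into_new ba by blast
    qed
  qed
qed

lemma irr_S: "\<not> conflict S x x"
proof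
  assume "conflict S x x"
  then obtain y y' where c: "conflict0 S y y'" "(Inr y, x) \<in> (flow S)\<^sup>*" "(Inr y', x) \<in> (flow S)\<^sup>*"
    unfolding conflict_def le_N_def by blast
  have e1: "Inr y = emb (Inr y)" "Inr y' = emb (Inr y')" by simp_all
  obtain z where z: "x = emb z" "(Inr y, z) \<in> (flow ON)\<^sup>*" using rt_from_emb[OF c(2) e1(1)] by blast
  obtain z' where z': "x = emb z'" "(Inr y', z') \<in> (flow ON)\<^sup>*" using rt_from_emb[OF c(3) e1(2)] by blast
  have zz: "z' = z" using z(1) z'(1) emb_inj by metis
  from c(1) have yy: "y \<in> trans ON" "y' \<in> trans ON" "y \<noteq> y'" "preT S y \<inter> preT S y' \<noteq> {}"
    unfolding conflict0_def S_simps by auto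
  then obtain q where q: "q \<in> preT S y" "q \<in> preT S y'" by blast
  show False
  proof (cases q)
    case (Inl p)
    then have "p \<in> preT ON y" "p \<in> preT ON y'" using q unfolding preT_S by auto
    then have "conflict0 ON y y'" using yy unfolding conflict0_def by blast
    then have "conflict ON z z" using z(2) z'(2) zz unfolding conflict_def le_N_def by blast
    then show False using irr by blast
  next
    case (Inr A)
    then have A: "A \<in> Bsharp ON" "y \<in> A" "y' \<in> A" using q unfolding preT_S by auto
    then obtain e e' where ee: "A = {e,e'}" "conflict ON (Inr e) (Inr e')" unfolding Bsharp_def by blast
    have "conflict ON (Inr y) (Inr y')"
    proof (cases "y = e")
      case True then have "y' = e'" using A ee(1) yy(3) by auto
      then show ?thesis using True ee(2) by simp
    next
      case False then have "y = e'" "y' = e" using A ee(1) yy(3) by auto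
      then show ?thesis using ee(2) conflict_sym by simp
    qed
    then obtain w w' where w: "conflict0 ON w w'" "(Inr w, Inr y) \<in> (flow ON)\<^sup>*" "(Inr w', Inr y') \<in> (flow ON)\<^sup>*"
      unfolding conflict_def le_N_def by blast
    have "(Inr w, z) \<in> (flow ON)\<^sup>*" using w(2) z(2) by (rule rtrancl_trans)
    moreover have "(Inr w', z) \<in> (flow ON)\<^sup>*" using w(3) z'(2) zz by (metis rtrancl_trans)
    ultimately have "conflict ON z z" using w(1) unfolding conflict_def le_N_def by blast
    then show False using irr by blast
  qed
qed

lemma wf_S: "wf_net S"
  using wf Bsharp_trans unfolding wf_net_def sharp_def by auto

lemma single_S: "\<forall>b \<in> places S. preP S b = {} \<or> (\<exists>e. preP S b = {e})"
proof
  fix b assume "b \<in> places S"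
  then have "(\<exists>b0 \<in> places ON. b = Inl b0) \<or> (\<exists>A. b = Inr A)" unfolding S_simps by blast
  then show "preP S b = {} \<or> (\<exists>e. preP S b = {e})"
  proof
    assume "\<exists>b0 \<in> places ON. b = Inl b0"
    then obtain b0 where "b0 \<in> places ON" "b = Inl b0" by blast
    then show ?thesis using single[of b0] preP_S_Inl[of b0] by simp
  qed (use preP_S_Inr in auto)
qed

lemma initP_S: "\<forall>b \<in> init S. preP S b = {}"
proof
  fix b assume "b \<in> init S"
  then show "preP S b = {}"
    unfolding S_simps using initP preP_S_Inl preP_S_Inr by auto
qed

lemma rooted_S: "\<forall>b \<in> places S. \<exists>b' \<in> init S. (Inl b', Inl b) \<in> le_N S"
proof
  fix b assume "b \<in> places S"
  then have "(\<exists>b0 \<in> places ON. b = Inl b0) \<or> (\<exists>A \<in> Bsharp ON. b = Inr A)" unfolding S_simps by blast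
  then show "\<exists>b' \<in> init S. (Inl b', Inl b) \<in> le_N S"
  proof
    assume "\<exists>b0 \<in> places ON. b = Inl b0"
    then obtain b0 where b0: "b0 \<in> places ON" "b = Inl b0" by blast
    then obtain b' where b': "b' \<in> init ON" "(Inl b', Inl b0) \<in> (flow ON)\<^sup>*" using rooted by blast
    have "(emb (Inl b'), emb (Inl b0)) \<in> (flow S)\<^sup>*" using rt_old[OF b'(2)] .
    then have "(Inl (Inl b'), Inl b) \<in> le_N S" using b0 by (simp add: le_N_def)
    moreover have "Inl b' \<in> init S" using b' unfolding S_simps by blast
    ultimately show ?thesis by blast
  next
    assume "\<exists>A \<in> Bsharp ON. b = Inr A"
    then obtain A where "A \<in> Bsharp ON" "b = Inr A" by blast
    moreover have "(Inl b, Inl b) \<in> le_N S" by (simp add: le_N_def)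
    ultimately show ?thesis unfolding S_simps by blast
  qed
qed

lemma fin_S: "\<forall>e \<in> trans S. finite {e' \<in> trans S. (Inr e', Inr e) \<in> le_N S}"
proof
  fix e assume e: "e \<in> trans S"
  have "{e' \<in> trans S. (Inr e', Inr e) \<in> le_N S} \<subseteq> {e' \<in> trans ON. (Inr e', Inr e) \<in> le_N ON}"
  proof
    fix e' assume "e' \<in> {e' \<in> trans S. (Inr e', Inr e) \<in> le_N S}"
    then have a: "e' \<in> trans ON" "(Inr e', Inr e) \<in> (flow S)\<^sup>*" unfolding S_simps le_N_def by auto
    obtain y where y: "Inr e = emb y" "(Inr e', y) \<in> (flow ON)\<^sup>*"
      using rt_from_emb[OF a(2), of "Inr e'"] by auto
    have "y = Inr e" using y(1) by (cases y) auto
    then show "e' \<in> {e' \<in> trans ON. (Inr e', Inr e) \<in> le_N ON}" using a y(2) by (simp add: le_N_def)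
  qed
  moreover have "finite {e' \<in> trans ON. (Inr e', Inr e) \<in> le_N ON}" using fin e unfolding S_simps by blast
  ultimately show "finite {e' \<in> trans S. (Inr e', Inr e) \<in> le_N S}" by (rule finite_subset)
qed

lemma occ_S: "occurrence_net S"
  unfolding occurrence_net_def
  using wf_S acyc_S safe_S single_S initP_S rooted_S fin_S irr_S by blast

end

theorem mainTheorem9:
  fixes ON :: "('p, 't) net"
  assumes "occurrence_net ON"
  shows "occurrence_net (sharp ON) \<and> configurations (sharp ON) = configurations ON"
proof -
  interpret occ ON using assms by unfold_locales
  show ?thesis using occ_S states_eq by blast
qed

end
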